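(* Let $(P_n)_{n\ge 0}$ be the Padovan sequence and for $1\le b\le 4$ and $m\ge 0$ let $r_m^{(4,b)}=\sum_{k=0}^{m}P_{4k+b}$. Then for every $m\ge 3$, $$r_m^{(4,b)}=2r_{m-1}^{(4,b)}+3r_{m-2}^{(4,b)}+r_{m-3}^{(4,b)}+c_b,$$ where $c_1=2$, $c_2=4$, $c_3=3$, $c_4=6$.
   Context: The Padovan sequence is defined by $P_0=P_1=P_2=1$ and $P_{n+3}=P_{n+1}+P_n$. *)

theory Defs
  imports Main
begin

fun padovan :: "nat \<Rightarrow> nat" where
  "padovan 0 = 1"
| "padovan (Suc 0) = 1"
| "padovan (Suc (Suc 0)) = 1"
| "padovan (Suc (Suc (Suc n))) = padovan (Suc n) + padovan n"

definition r4 :: "nat \<Rightarrow> nat \<Rightarrow> nat" where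
  "r4 b m = (\<Sum>k = 0..m. padovan (4 * k + b))"

definition c4 :: "nat \<Rightarrow> nat" where
  "c4 b = (if b = 1 then 2 else if b = 2 then 4 else if b = 3 then 3 else 6)"

end

theory Submission
  imports Defs
begin

lemma pad_rec: "padovan (n + 12) = 2 * padovan (n + 8) + 3 * padovan (n + 4) + padovan n"
proof (induction n rule: less_induct)
  case (less n)
  show ?case
  proof (cases "n < 3")
    case True
    then have "n = 0 \<or> n = 1 \<or> n = 2" by auto
    then show ?thesis by (auto simp: numeral_eq_Suc)
  next
    case False
    then obtain k where k: "n = k + 3" by (metis add.commute le_Suc_ex not_less)
    have h1: "padovan (k+1+12) = 2 * padovan (k+1+8) + 3 * padovan (k+1+4) + padovan (k+1)"
      using less.IH[of "k+1"] k by (simp add: algebra_simps)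
    have h0: "padovan (k+12) = 2 * padovan (k+8) + 3 * padovan (k+4) + padovan k"
      using less.IH[of "k"] k by simp
    have e: "\<And>j. padovan (j + 3) = padovan (j+1) + padovan j"
      by (simp add: numeral_eq_Suc)
    have "padovan (k+3+12) = padovan (k+1+12) + padovan (k+12)" using e[of "k+12"] by (simp add: algebra_simps)
    moreover have "padovan (k+3+8) = padovan (k+1+8) + padovan (k+8)" using e[of "k+8"] by (simp add: algebra_simps)
    moreover have "padovan (k+3+4) = padovan (k+1+4) + padovan (k+4)" using e[of "k+4"] by (simp add: algebra_simps)
    moreover have "padovan (k+3) = padovan (k+1) + padovan k" using e[of k] .
    ultimately show ?thesis using h0 h1 k by simp
  qed
qed

lemma main: "1 \<le> b \<Longrightarrow> b \<le> 4 \<Longrightarrow>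
  r4 b (n+3) = 2 * r4 b (n+2) + 3 * r4 b (n+1) + r4 b n + c4 b"
proof (induction n)
  case 0
  then have "b = 1 \<or> b = 2 \<or> b = 3 \<or> b = 4" by auto
  then show ?case by (auto simp: r4_def c4_def numeral_eq_Suc)
next
  case (Suc n)
  have S: "\<And>j. r4 b (Suc j) = r4 b j + padovan (4 * Suc j + b)"
    by (simp add: r4_def)
  have R: "padovan (4 * (n+4) + b) = 2 * padovan (4*(n+3)+b) + 3 * padovan (4*(n+2)+b) + padovan (4*(n+1)+b)"
    using pad_rec[of "4*(n+1)+b"] by (simp add: algebra_simps)
  have "r4 b (Suc n + 3) = r4 b (n+3) + padovan (4 * (n+4) + b)"
    using S[of "n+3"] by (simp add: algebra_simps)
  also have "... = 2 * r4 b (Suc n+2) + 3 * r4 b (Suc n+1) + r4 b (Suc n) + c4 b"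
    using Suc R S[of "n+2"] S[of "n+1"] S[of n] by (simp add: algebra_simps)
  finally show ?case .
qed

theorem theorem4p4:
  fixes b m :: nat
  assumes "1 \<le> b" and "b \<le> 4" and "3 \<le> m"
  shows "r4 b m = 2 * r4 b (m - 1) + 3 * r4 b (m - 2) + r4 b (m - 3) + c4 b"
proof -
  obtain n where "m = n + 3" using assms(3) by (metis add.commute le_Suc_ex)
  then show ?thesis using main[OF assms(1,2), of n] by simp
qed

end
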